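(* Let $\mathbf{k}$ be a commutative ring, $n\ge0$, $\mathcal{A}=\mathbf{k}[S_n]$. The family $\{\mathbf{B}_{\operatorname{LRM}'(w)}\,w \mid w\in S_n\}$ is a basis of the $\mathbf{k}$-module $\mathcal{A}$.
   Context: $S_n$ is the symmetric group on $[n]=\{1,\dots,n\}$, with product $(uw)(i)=u(w(i))$. $\operatorname{Des}(u)=\{i\in[n-1]:u(i)>u(i+1)\}$; for $I\subseteq[n-1]$, $\mathbf{B}_I=\sum_{u\in S_n,\ \operatorname{Des}(u)\subseteq I}u$. $\operatorname{LRM}(w)=\{i\in[n]: w(k)>i \text{ for all } k<w^{-1}(i)\}$ (left-to-right minima), and $\operatorname{LRM}'(w)=\{\ell-1:\ell\in\operatorname{LRM}(w),\ \ell>1\}\subseteq[n-1]$. *)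

theory Defs
  imports "HOL-Combinatorics.Permutations"
begin

text \<open>Elements of the group algebra k[S_n] are functions (nat => nat) => 'k supported on S_n.
 Product in S_n: (u w)(i) = u (w i), i.e. u o w.\<close>

definition perms :: "nat \<Rightarrow> (nat \<Rightarrow> nat) set" where
  "perms n = {p. p permutes {1..n}}"

definition Des :: "nat \<Rightarrow> (nat \<Rightarrow> nat) \<Rightarrow> nat set" where
  "Des n u = {i \<in> {1..n-1}. u i > u (Suc i)}"

definition supported :: "nat \<Rightarrow> ((nat \<Rightarrow> nat) \<Rightarrow> 'k::comm_ring_1) \<Rightarrow> bool" where
  "supported n a \<longleftrightarrow> (\<forall>u. u \<notin> perms n \<longrightarrow> a u = 0)"

definition delta :: "(nat \<Rightarrow> nat) \<Rightarrow> (nat \<Rightarrow> nat) \<Rightarrow> 'k::comm_ring_1" where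
  "delta w = (\<lambda>u. if u = w then 1 else 0)"

definition conv :: "nat \<Rightarrow> ((nat \<Rightarrow> nat) \<Rightarrow> 'k::comm_ring_1) \<Rightarrow> ((nat \<Rightarrow> nat) \<Rightarrow> 'k) \<Rightarrow> (nat \<Rightarrow> nat) \<Rightarrow> 'k" where
  "conv n a b = (\<lambda>w. \<Sum>u\<in>perms n. \<Sum>v\<in>perms n. if u \<circ> v = w then a u * b v else 0)"

definition B :: "nat \<Rightarrow> nat set \<Rightarrow> (nat \<Rightarrow> nat) \<Rightarrow> 'k::comm_ring_1" where
  "B n I = (\<lambda>u. if u \<in> perms n \<and> Des n u \<subseteq> I then 1 else 0)"

definition LRM :: "nat \<Rightarrow> (nat \<Rightarrow> nat) \<Rightarrow> nat set" where
  "LRM n w = {i \<in> {1..n}. \<forall>k. 1 \<le> k \<and> k < inv w i \<longrightarrow> w k > i}"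

definition LRM' :: "nat \<Rightarrow> (nat \<Rightarrow> nat) \<Rightarrow> nat set" where
  "LRM' n w = {l - 1 | l. l \<in> LRM n w \<and> l > 1}"

definition basis_elt :: "nat \<Rightarrow> (nat \<Rightarrow> nat) \<Rightarrow> (nat \<Rightarrow> nat) \<Rightarrow> 'k::comm_ring_1" where
  "basis_elt n w = conv n (B n (LRM' n w)) (delta w)"

definition lincomb :: "nat \<Rightarrow> ((nat \<Rightarrow> nat) \<Rightarrow> 'k::comm_ring_1) \<Rightarrow> (nat \<Rightarrow> nat) \<Rightarrow> 'k" where
  "lincomb n c = (\<lambda>x. \<Sum>w\<in>perms n. c w * basis_elt n w x)"

end

theory Submission
  imports Defs
begin

lemma nodes:
  assumes u: "u permutes {1..n}" and D: "Des n u \<subseteq> LRM' n w"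
    and y: "y \<in> {1..n-1}" and nl: "Suc y \<notin> LRM n w"
  shows "u y < u (Suc y)"
proof -
  have "y \<notin> Des n u"
  proof
    assume "y \<in> Des n u"
    then have "y \<in> LRM' n w" using D by blast
    then obtain l where "y = l - 1" "l \<in> LRM n w" "l > 1" unfolding LRM'_def by blast
    then have "Suc y = l" by simp
    with nl \<open>l \<in> LRM n w\<close> show False by simp
  qed
  then have "\<not> u y > u (Suc y)" using y unfolding Des_def by auto
  moreover have "u y \<noteq> u (Suc y)" using permutes_inj[OF u] by (metis inj_eq n_not_Suc_n)
  ultimately show ?thesis by simp
qed

lemma key_le:
  assumes w: "w permutes {1..n}" and u: "u permutes {1..n}" and D: "Des n u \<subseteq> LRM' n w"
    and p: "p \<in> {1..n}" and fx: "\<forall>q. 1 \<le> q \<and> q < p \<longrightarrow> u (w q) = w q"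
  shows "u (w p) \<le> w p"
proof -
  define v where "v = w p"
  have v: "v \<in> {1..n}" unfolding v_def using p permutes_in_image[OF w] by blast
  have LRMsub: "LRM n w \<subseteq> {1..n}" unfolding LRM_def by blast
  have fixl: "u l = l" if l: "l \<in> LRM n w" "l > v" for l
  proof -
    define q where "q = inv w l"
    have lr: "l \<in> {1..n}" using l LRMsub by blast
    have wq: "w q = l" unfolding q_def using permutes_inverses(1)[OF w] by simp
    have q: "q \<in> {1..n}" unfolding q_def using permutes_in_image[OF permutes_inv[OF w]] lr by blast
    have kk: "\<forall>k. 1 \<le> k \<and> k < q \<longrightarrow> w k > l" using l(1) unfolding LRM_def q_def by blast
    have "q \<noteq> p" using wq l(2) v_def by auto
    moreover have "\<not> q > p" using kk p l(2) v_def by auto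
    ultimately have "q < p" by simp
    then show ?thesis using fx q wq by auto
  qed
  define Z where "Z = (if \<exists>l\<in>LRM n w. l > v then (LEAST l. l \<in> LRM n w \<and> l > v) else n+1)"
  have Zp: "Z \<le> n+1 \<and> Z > v \<and> (Z \<le> n \<longrightarrow> u Z = Z) \<and> (\<forall>y. v < y \<and> y < Z \<longrightarrow> y \<notin> LRM n w)"
  proof (cases "\<exists>l\<in>LRM n w. l > v")
    case True
    then obtain l0 where l0: "l0 \<in> LRM n w \<and> l0 > v" by blast
    have ZZ: "Z = (LEAST l. l \<in> LRM n w \<and> l > v)" using True Z_def by simp
    have zin: "Z \<in> LRM n w \<and> Z > v" unfolding ZZ by (rule LeastI[of _ l0], rule l0)
    have zmin: "\<forall>y. v < y \<and> y < Z \<longrightarrow> y \<notin> LRM n w"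
      unfolding ZZ using not_less_Least by blast
    show ?thesis using zin zmin fixl LRMsub by force
  next
    case False
    then show ?thesis using Z_def v by auto
  qed
  have up: "\<forall>y. Z + d = y \<longrightarrow> y \<le> n \<longrightarrow> y \<le> u y" for d
  proof (induction d)
    case 0
    then show ?case using Zp by auto
  next
    case (Suc d)
    show ?case
    proof (intro allI impI)
      fix y assume y: "Z + Suc d = y" "y \<le> n"
      show "y \<le> u y"
      proof (cases "y \<in> LRM n w")
        case True
        then show ?thesis using fixl Zp y by auto
      next
        case False
        have "Z + d \<in> {1..n-1}" using y Zp by auto
        then have "u (Z + d) < u y" using nodes[OF u D, of "Z+d"] False y by auto
        moreover have "Z + d \<le> u (Z+d)" using Suc y by auto
        ultimately show ?thesis using y by auto
      qed
    qed
  qed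
  have up2: "y \<le> u y" if "Z \<le> y" "y \<le> n" for y
    using up[of "y - Z"] that by auto
  have maps: "u y < Z" if y: "y \<in> {1..n}" "y < Z" for y
  proof (rule ccontr)
    assume "\<not> u y < Z"
    then have uyZ: "u y \<in> {Z..n}" using permutes_in_image[OF u] y by auto
    have sub: "u ` {Z..n} \<subseteq> {Z..n}"
    proof
      fix t assume "t \<in> u ` {Z..n}"
      then obtain y' where "y' \<in> {Z..n}" "t = u y'" by blast
      moreover have "y' \<in> {1..n}" using \<open>y' \<in> {Z..n}\<close> Zp by auto
      ultimately show "t \<in> {Z..n}" using up2[of y'] permutes_in_image[OF u] by force
    qed
    have "u ` {Z..n} = {Z..n}"
      by (rule endo_inj_surj[OF _ sub inj_on_subset[OF permutes_inj[OF u] subset_UNIV]]) simp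
    then have "u y \<in> u ` {Z..n}" using uyZ by simp
    then obtain y' where "y' \<in> {Z..n}" "u y' = u y" by (auto simp: image_iff)
    then have "y' = y" using permutes_inj[OF u] by (simp add: inj_eq)
    then show False using \<open>y' \<in> {Z..n}\<close> y by auto
  qed
  have down: "\<forall>y. v \<le> y \<longrightarrow> y + d + 1 = Z \<longrightarrow> u y \<le> y" for d
  proof (induction d)
    case 0
    show ?case
    proof (intro allI impI)
      fix y assume "v \<le> y" "y + 0 + 1 = Z"
      then show "u y \<le> y" using maps[of y] v Zp by auto
    qed
  next
    case (Suc d)
    show ?case
    proof (intro allI impI)
      fix y assume y: "v \<le> y" "y + Suc d + 1 = Z"
      have "u (Suc y) \<le> Suc y" using Suc y by auto
      moreover have "Suc y \<notin> LRM n w" using Zp y by auto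
      moreover have "y \<in> {1..n-1}" using y v Zp by auto
      ultimately show "u y \<le> y" using nodes[OF u D, of y] by auto
    qed
  qed
  show ?thesis using down[of "Z - v - 1"] Zp unfolding v_def[symmetric] by auto
qed

definition lexless :: "nat \<Rightarrow> (nat \<Rightarrow> nat) \<Rightarrow> (nat \<Rightarrow> nat) \<Rightarrow> bool" where
  "lexless n x w = (\<exists>p\<in>{1..n}. (\<forall>q. 1 \<le> q \<and> q < p \<longrightarrow> x q = w q) \<and> x p < w p)"

lemma lexless_trans:
  assumes "lexless n x y" "lexless n y z" shows "lexless n x z"
proof -
  obtain p1 where p1: "p1 \<in> {1..n}" "\<forall>q. 1 \<le> q \<and> q < p1 \<longrightarrow> x q = y q" "x p1 < y p1"
    using assms(1) unfolding lexless_def by blast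
  obtain p2 where p2: "p2 \<in> {1..n}" "\<forall>q. 1 \<le> q \<and> q < p2 \<longrightarrow> y q = z q" "y p2 < z p2"
    using assms(2) unfolding lexless_def by blast
  consider "p1 < p2" | "p2 < p1" | "p1 = p2" by linarith
  then show ?thesis
  proof cases
    case 1
    then show ?thesis unfolding lexless_def using p1 p2 by (intro bexI[of _ p1]) auto
  next
    case 2
    then show ?thesis unfolding lexless_def using p1 p2 by (intro bexI[of _ p2]) auto
  next
    case 3
    then show ?thesis unfolding lexless_def using p1 p2 by (intro bexI[of _ p1]) auto
  qed
qed

lemma lexless_irrefl: "\<not> lexless n x x"
  unfolding lexless_def by auto

lemma key_lex:
  assumes w: "w permutes {1..n}" and u: "u permutes {1..n}" and D: "Des n u \<subseteq> LRM' n w"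
    and ne: "u \<noteq> id"
  shows "lexless n (u \<circ> w) w"
proof -
  obtain y where y: "u y \<noteq> y" using ne by (metis eq_id_iff)
  have yin: "y \<in> {1..n}" using y u by (meson permutes_not_in)
  define S where "S = {p \<in> {1..n}. u (w p) \<noteq> w p}"
  have "inv w y \<in> S" unfolding S_def
    using permutes_inverses(1)[OF w] permutes_in_image[OF permutes_inv[OF w]] yin y by auto
  define p where "p = (LEAST p. p \<in> S)"
  have pS: "p \<in> S" unfolding p_def by (rule LeastI) fact
  have fx: "\<forall>q. 1 \<le> q \<and> q < p \<longrightarrow> u (w q) = w q"
  proof (intro allI impI)
    fix q assume q: "1 \<le> q \<and> q < p"
    then have "q \<notin> S" unfolding p_def using not_less_Least by blast
    moreover have "q \<le> n" using q pS S_def by auto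
    ultimately show "u (w q) = w q" using q S_def by auto
  qed
  have "u (w p) \<le> w p" using key_le[OF w u D _ fx] pS S_def by auto
  then have "u (w p) < w p" using pS S_def by auto
  then show ?thesis unfolding lexless_def using pS S_def fx by auto
qed

definition phi :: "nat \<Rightarrow> (nat \<Rightarrow> nat) \<Rightarrow> nat" where
  "phi n w = card {x \<in> perms n. lexless n x w}"

lemma finite_perms: "finite (perms n)"
  unfolding perms_def by (rule finite_permutations) simp

lemma phi_mono:
  assumes "x \<in> perms n" "lexless n x w" shows "phi n x < phi n w"
  unfolding phi_def
proof (rule psubset_card_mono)
  show "finite {x \<in> perms n. lexless n x w}" using finite_perms by simp
  show "{x' \<in> perms n. lexless n x' x} \<subset> {x \<in> perms n. lexless n x w}"
    using assms lexless_trans lexless_irrefl by blast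
qed

lemma basis_eq:
  fixes w :: "nat \<Rightarrow> nat"
  assumes that: "w \<in> perms n"
  shows "(basis_elt n w x :: 'k::comm_ring_1) =
    (\<Sum>u\<in>perms n. if u \<circ> w = x then B n (LRM' n w) u else 0)"
proof -
  have "(\<Sum>v\<in>perms n. if u \<circ> v = x then (B n (LRM' n w) u :: 'k) * delta w v else 0)
      = (if u \<circ> w = x then B n (LRM' n w) u else 0)" for u
  proof -
    have "(\<Sum>v\<in>perms n. if u \<circ> v = x then (B n (LRM' n w) u :: 'k) * delta w v else 0)
      = (\<Sum>v\<in>perms n. if v = w then (if u \<circ> w = x then B n (LRM' n w) u else 0) else 0)"
      by (rule sum.cong) (auto simp: delta_def)
    also have "\<dots> = (if u \<circ> w = x then B n (LRM' n w) u else 0)"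
      using that finite_perms by simp
    finally show ?thesis .
  qed
  then show ?thesis unfolding basis_elt_def conv_def by simp
qed

lemma basis_diag:
  assumes "w \<in> perms n" shows "(basis_elt n w w :: 'k::comm_ring_1) = 1"
proof -
  have w: "w permutes {1..n}" using assms perms_def by auto
  have "(\<Sum>u\<in>perms n. if u \<circ> w = w then (B n (LRM' n w) u :: 'k) else 0)
      = (\<Sum>u\<in>perms n. if u = id then B n (LRM' n w) id else 0)"
  proof (rule sum.cong)
    fix u assume "u \<in> perms n"
    have "u \<circ> w = w \<longleftrightarrow> u = id"
    proof
      assume h: "u \<circ> w = w"
      show "u = id"
      proof
        fix y
        have "u (w (inv w y)) = w (inv w y)" using h by (metis comp_apply)
        then show "u y = id y" using permutes_inverses(1)[OF w] by simp
      qed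
    qed simp
    then show "(if u \<circ> w = w then (B n (LRM' n w) u :: 'k) else 0)
      = (if u = id then B n (LRM' n w) id else 0)" by auto
  qed simp
  also have "\<dots> = B n (LRM' n w) id"
    using finite_perms permutes_id[of "{1..n}"] by (simp add: perms_def)
  also have "\<dots> = 1"
    unfolding B_def Des_def perms_def using permutes_id[of "{1..n}"] by auto
  finally have "(\<Sum>u\<in>perms n. if u \<circ> w = w then (B n (LRM' n w) u :: 'k) else 0) = 1" .
  then show ?thesis by (simp only: basis_eq[OF assms])
qed

lemma basis_nz:
  assumes "w \<in> perms n" "(basis_elt n w x :: 'k::comm_ring_1) \<noteq> 0"
  shows "x \<in> perms n \<and> (x = w \<or> phi n x < phi n w)"
proof -
  have "(\<Sum>u\<in>perms n. if u \<circ> w = x then (B n (LRM' n w) u :: 'k) else 0) \<noteq> 0"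
    using assms(2) unfolding basis_eq[OF assms(1)] .
  then have "\<exists>u\<in>perms n. (if u \<circ> w = x then (B n (LRM' n w) u :: 'k) else 0) \<noteq> 0"
  proof (rule contrapos_np)
    assume "\<not> (\<exists>u\<in>perms n. (if u \<circ> w = x then (B n (LRM' n w) u :: 'k) else 0) \<noteq> 0)"
    then show "(\<Sum>u\<in>perms n. if u \<circ> w = x then (B n (LRM' n w) u :: 'k) else 0) = 0"
      by (intro sum.neutral) blast
  qed
  then obtain u where u0: "u \<in> perms n" "(if u \<circ> w = x then (B n (LRM' n w) u :: 'k) else 0) \<noteq> 0"
    by blast
  then have u: "u \<in> perms n" "u \<circ> w = x" "(B n (LRM' n w) u :: 'k) \<noteq> 0"
    by (auto split: if_splits)
  have D: "Des n u \<subseteq> LRM' n w" using u(3) unfolding B_def by (auto split: if_splits)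
  have w: "w permutes {1..n}" and up: "u permutes {1..n}" using assms u perms_def by auto
  have xp: "x \<in> perms n" using permutes_compose[OF w up] u(2) perms_def by auto
  show ?thesis
  proof (cases "u = id")
    case True
    then show ?thesis using u xp by auto
  next
    case False
    then have "lexless n x w" using key_lex[OF w up D] u(2) by simp
    then show ?thesis using phi_mono xp by blast
  qed
qed

lemma basis_supp:
  assumes "w \<in> perms n" "x \<notin> perms n" shows "(basis_elt n w x :: 'k::comm_ring_1) = 0"
  using basis_nz assms by blast

theorem corollary3p6:
  fixes n :: nat
  shows "(\<forall>c :: (nat \<Rightarrow> nat) \<Rightarrow> 'k::comm_ring_1.
            lincomb n c = (\<lambda>_. 0) \<longrightarrow> (\<forall>w\<in>perms n. c w = 0))
       \<and> (\<forall>f :: (nat \<Rightarrow> nat) \<Rightarrow> 'k. supported n f \<longrightarrow> (\<exists>c. f = lincomb n c))"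
proof (intro conjI allI impI)
  fix c :: "(nat \<Rightarrow> nat) \<Rightarrow> 'k"
  assume lc: "lincomb n c = (\<lambda>_. 0)"
  show "\<forall>w\<in>perms n. c w = 0"
  proof (rule ccontr)
    assume "\<not> (\<forall>w\<in>perms n. c w = 0)"
    then have ne: "{w \<in> perms n. c w \<noteq> 0} \<noteq> {}" by blast
    have fin: "finite {w \<in> perms n. c w \<noteq> 0}" using finite_perms by simp
    define W where "W = {w \<in> perms n. c w \<noteq> 0}"
    have neW: "phi n ` W \<noteq> {}" using ne W_def by blast
    have finW: "finite (phi n ` W)" using fin W_def by simp
    obtain w where w: "w \<in> W" "phi n w = Max (phi n ` W)"
      using Max_in[OF finW neW] by auto
    have wmax: "\<forall>w'\<in>W. phi n w' \<le> phi n w"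
      using Max_ge[OF finW] w(2) by simp
    have wW: "w \<in> {w \<in> perms n. c w \<noteq> 0}" using w W_def by simp
    have "lincomb n c w = (\<Sum>w'\<in>perms n. if w' = w then c w else 0)"
      unfolding lincomb_def
    proof (rule sum.cong)
      fix w' assume w': "w' \<in> perms n"
      show "c w' * basis_elt n w' w = (if w' = w then c w else 0)"
      proof (cases "w' = w")
        case True then show ?thesis using basis_diag[OF w', where 'k='k] by simp
      next
        case False
        show ?thesis
        proof (cases "c w' = 0")
          case False': False
          then have "phi n w' \<le> phi n w" using wmax w' W_def by auto
          then have "basis_elt n w' w = (0::'k)" using basis_nz[OF w', of w] False by auto
          then show ?thesis using False by simp
        qed (use False in simp)
      qed
    qed simp
    also have "\<dots> = c w" using wW finite_perms[of n] by (simp add: sum.delta')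
    finally have "c w = lincomb n c w" by simp
    also have "\<dots> = 0" using lc by simp
    finally show False using wW by simp
  qed
next
  fix f :: "(nat \<Rightarrow> nat) \<Rightarrow> 'k"
  assume sf: "supported n f"
  have main: "\<forall>f :: (nat \<Rightarrow> nat) \<Rightarrow> 'k. supported n f \<longrightarrow> (\<forall>x. f x \<noteq> 0 \<longrightarrow> phi n x < m)
      \<longrightarrow> (\<exists>c. f = lincomb n c)" for m
  proof (induction m)
    case 0
    show ?case
    proof (intro allI impI)
      fix f :: "(nat \<Rightarrow> nat) \<Rightarrow> 'k" assume "\<forall>x. f x \<noteq> 0 \<longrightarrow> phi n x < 0"
      then have "f = (\<lambda>_. 0)" by auto
      then show "\<exists>c. f = lincomb n c"
        by (intro exI[of _ "\<lambda>_. 0"]) (simp add: lincomb_def)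
    qed
  next
    case (Suc m)
    show ?case
    proof (intro allI impI)
      fix f :: "(nat \<Rightarrow> nat) \<Rightarrow> 'k"
      assume sf: "supported n f" and bd: "\<forall>x. f x \<noteq> 0 \<longrightarrow> phi n x < Suc m"
      define T where "T = {x \<in> perms n. phi n x = m}"
      have finT: "finite T" unfolding T_def using finite_perms by simp
      define g where "g = (\<lambda>y. \<Sum>x\<in>T. f x * basis_elt n x y)"
      define f' where "f' = (\<lambda>y. f y - g y)"
      have sf': "supported n f'"
        unfolding supported_def
      proof (intro allI impI)
        fix y assume y: "y \<notin> perms n"
        have "f y = 0" using sf y supported_def by auto
        moreover have "g y = 0" unfolding g_def
          by (rule sum.neutral) (use basis_supp[where 'k='k] y T_def in auto)
        ultimately show "f' y = 0" unfolding f'_def by simp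
      qed
      have bd': "\<forall>x. f' x \<noteq> 0 \<longrightarrow> phi n x < m"
      proof (intro allI impI)
        fix y assume nz: "f' y \<noteq> 0"
        have yP: "y \<in> perms n" using sf' nz supported_def by auto
        show "phi n y < m"
        proof (rule ccontr)
          assume "\<not> phi n y < m"
          then consider "phi n y = m" | "phi n y > m" by linarith
          then show False
          proof cases
            case 1
            have "g y = (\<Sum>x\<in>T. if x = y then f y else 0)" unfolding g_def
            proof (rule sum.cong)
              fix x assume x: "x \<in> T"
              show "f x * basis_elt n x y = (if x = y then f y else 0)"
              proof (cases "x = y")
                case True then show ?thesis using basis_diag[OF yP, where 'k='k] by simp
              next
                case False
                then have "basis_elt n x y = (0::'k)" using basis_nz[of x n y] x T_def 1 by auto
                then show ?thesis using False by simp
              qed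
            qed simp
            also have "\<dots> = f y" using finT yP 1 T_def by simp
            finally show False using nz f'_def by simp
          next
            case 2
            have "f y = 0" using bd 2 by (meson not_less_eq)
            moreover have "g y = 0" unfolding g_def
            proof (rule sum.neutral, intro ballI)
              fix x assume x: "x \<in> T"
              have "basis_elt n x y = (0::'k)" using basis_nz[of x n y] x T_def 2 by auto
              then show "f x * basis_elt n x y = 0" by simp
            qed
            ultimately show False using nz f'_def by simp
          qed
        qed
      qed
      obtain c' where c': "f' = lincomb n c'" using Suc sf' bd' by blast
      define c where "c = (\<lambda>w. c' w + (if w \<in> T then f w else 0))"
      have "lincomb n c = (\<lambda>y. lincomb n c' y + g y)"
      proof
        fix y
        have "lincomb n c y = lincomb n c' y
            + (\<Sum>w\<in>perms n. (if w \<in> T then f w else 0) * basis_elt n w y)"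
          unfolding lincomb_def c_def by (simp add: distrib_right sum.distrib)
        also have "(\<Sum>w\<in>perms n. (if w \<in> T then f w else 0) * basis_elt n w y) = g y"
        proof -
          have "(\<Sum>w\<in>perms n. (if w \<in> T then f w else 0) * basis_elt n w y)
              = (\<Sum>w\<in>perms n. if w \<in> T then f w * basis_elt n w y else 0)"
            by (rule sum.cong) auto
          also have "\<dots> = (\<Sum>w\<in>perms n \<inter> T. f w * basis_elt n w y)"
            using finite_perms by (simp add: sum.inter_restrict)
          also have "perms n \<inter> T = T" using T_def by auto
          finally show ?thesis unfolding g_def by simp
        qed
        finally show "lincomb n c y = lincomb n c' y + g y" .
      qed
      moreover have "lincomb n c' y = f y - g y" for y using c' f'_def by metis
      ultimately have "lincomb n c = f" by auto
      then show "\<exists>c. f = lincomb n c" by metis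
    qed
  qed
  have "\<forall>x. f x \<noteq> 0 \<longrightarrow> phi n x < card (perms n) + 1"
  proof (intro allI impI)
    fix x
    have "phi n x \<le> card (perms n)" unfolding phi_def
      by (rule card_mono) (use finite_perms in auto)
    then show "phi n x < card (perms n) + 1" by simp
  qed
  then show "\<exists>c. f = lincomb n c" using main sf by blast
qed

end
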